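(* Let $\mu$ be a non-degenerate probability measure on $\mathbb{C}$ (not a point mass), $X_1, X_2,\ldots$ iid with law $\mu$, $0\le k_n\le n$ deterministic integers with $k_n = o(n)$, and $\xi_1^{(n)},\ldots,\xi_{k_n}^{(n)}$ a deterministic triangular array of complex numbers such that, for some Lebesgue-null set $E\subset\mathbb{C}$, $\limsup_{n\to\infty}\frac1n\sum_{l=1}^{k_n}\log_-|z-\xi_l^{(n)}| = 0$ for all $z\in\mathbb{C}\setminus E$. Let \[ L_n(z) := \sum_{j=1}^{n-k_n}\frac{1}{z - X_j} + \sum_{l=1}^{k_n}\frac{1}{z - \xi_l^{(n)}}. \] Then there is a set $F \subset \mathbb{C}$ of Lebesgue measure zero such that for every $z \in \mathbb{C}\setminus F$, $\frac{1}{n}\log|L_n(z)| \to 0$ in probability as $n \to \infty$.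
   Context: $\log_- x := |\log x|$ for $0 \le x \le 1$, $\log_- x := 0$ for $x \ge 1$, $\log_-(0) := \infty$. $L_n = p_n'/p_n$ is the logarithmic derivative of $p_n(z) = \prod_{j=1}^{n-k_n}(z-X_j)\prod_{l=1}^{k_n}(z-\xi_l^{(n)})$. *)

theory Defs
  imports "HOL-Probability.Probability"
begin

definition log_minus :: "real \<Rightarrow> ereal" where
  "log_minus x = (if x = 0 then \<infinity> else if x \<le> 1 then ereal (\<bar>ln x\<bar>) else 0)"

text \<open>The logarithmic derivative L_n(z) (finite part; poles are handled separately
  in the statement).\<close>
definition Ln_fun :: "(nat \<Rightarrow> nat) \<Rightarrow> (nat \<Rightarrow> nat \<Rightarrow> complex) \<Rightarrow> (nat \<Rightarrow> complex)
    \<Rightarrow> nat \<Rightarrow> complex \<Rightarrow> complex" where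
  "Ln_fun k \<xi> x n z =
     (\<Sum>j\<in>{1..n - k n}. 1 / (z - x j)) + (\<Sum>l\<in>{1..k n}. 1 / (z - \<xi> n l))"

end

theory Submission imports Defs "HOL-Real_Asymp.Real_Asymp" begin

lemma nondirac_cdf:
  assumes "real_distribution \<nu>" and nd: "\<And>a. \<nu> \<noteq> return borel a"
  shows "\<exists>r. 0 < cdf \<nu> r \<and> cdf \<nu> r < 1"
proof (rule ccontr)
  interpret real_distribution \<nu> by fact
  assume "\<not> ?thesis"
  hence c01: "cdf \<nu> r = 0 \<or> cdf \<nu> r = 1" for r
    using cdf_nonneg[of r] cdf_bounded_prob[of r] by (smt (verit))
  define S where "S = {r. cdf \<nu> r = 1}"
  have "\<forall>\<^sub>F x in at_top. cdf \<nu> x > 1/2"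
    using cdf_lim_at_top_prob by (rule order_tendstoD) simp
  then obtain b where b: "\<And>x. x \<ge> b \<Longrightarrow> cdf \<nu> x > 1/2" by (auto simp: eventually_at_top_linorder)
  have "b \<in> S" using b[of b] c01[of b] by (auto simp: S_def)
  have "\<forall>\<^sub>F x in at_bot. cdf \<nu> x < 1/2"
    using cdf_lim_at_bot by (rule order_tendstoD) simp
  then obtain b' where b': "\<And>x. x \<le> b' \<Longrightarrow> cdf \<nu> x < 1/2" by (auto simp: eventually_at_bot_linorder)
  have bdd: "bdd_below S"
    unfolding bdd_below_def S_def
    proof (rule exI[of _ b'], safe)
    fix x assume "cdf \<nu> x = 1"
    then show "b' \<le> x" using b'[of x] by force
  qed
  define a where "a = Inf S"
  have ge: "cdf \<nu> x = 1" if xa: "x > a" for x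
  proof -
    obtain s where "s \<in> S" "s < x" using cInf_lessD[of S x] \<open>b \<in> S\<close> xa a_def by auto
    then show ?thesis using cdf_nondecreasing[of s x] c01[of x] by (auto simp: S_def)
  qed
  have "cdf \<nu> a = 1"
  proof -
    have "(cdf \<nu> \<longlongrightarrow> cdf \<nu> a) (at_right a)"
      using cdf_is_right_cont[of a] by (simp add: continuous_within)
    moreover have "(cdf \<nu> \<longlongrightarrow> 1) (at_right a)"
      by (rule tendsto_eventually) (auto simp: eventually_at_right_field intro!: exI[of _ "a+1"] ge)
    ultimately show ?thesis using tendsto_unique[OF trivial_limit_at_right_real] by blast
  qed
  have lt: "cdf \<nu> x = 0" if "x < a" for x
  proof -
    have "x \<notin> S" using cInf_lower[OF _ bdd, of x] that a_def by auto
    then show ?thesis using c01[of x] by (auto simp: S_def)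
  qed
  have rd: "real_distribution (return borel a)"
    by (simp add: real_distribution_def real_distribution_axioms_def prob_space_return)
  have "cdf \<nu> = cdf (return borel a)"
  proof
    fix x show "cdf \<nu> x = cdf (return borel a) x"
      using ge[of x] lt[of x] \<open>cdf \<nu> a = 1\<close>
      by (cases x a rule: linorder_cases) (auto simp: cdf_def measure_return)
  qed
  hence "\<nu> = return borel a" using cdf_unique[OF real_distribution_axioms rd] by simp
  with nd show False by blast
qed



lemma AE_pos_ex:
  assumes "AE x in M. P x" "A \<in> sets M" "measure M A > 0"
  shows "\<exists>x\<in>A. P x"
proof (rule ccontr)
  assume "\<not> ?thesis"
  hence "AE x in M. x \<notin> A" using assms(1) by (auto elim: AE_mp)
  hence "A \<in> null_sets M" using AE_iff_null_sets[OF assms(2)] by simp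
  thus False using assms(3) by (simp add: measure_def null_setsD1)
qed

lemma char_lt1:
  assumes "real_distribution \<nu>" and r: "0 < cdf \<nu> r" "cdf \<nu> r < 1"
  shows "\<exists>T>0. \<forall>u. u \<noteq> 0 \<and> \<bar>u\<bar> \<le> T \<longrightarrow> cmod (char \<nu> u) < 1"
proof -
  interpret real_distribution \<nu> by fact
  have "\<forall>\<^sub>F x in at_bot. cdf \<nu> x < cdf \<nu> r"
    by (rule order_tendstoD(2)[OF cdf_lim_at_bot r(1)])
  then obtain b where b: "\<And>x. x \<le> b \<Longrightarrow> cdf \<nu> x < cdf \<nu> r" by (auto simp: eventually_at_bot_linorder)
  have "\<forall>\<^sub>F x in at_top. cdf \<nu> x > cdf \<nu> r"
    by (rule order_tendstoD(1)[OF cdf_lim_at_top_prob r(2)])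
  then obtain b' where b': "\<And>x. x \<ge> b' \<Longrightarrow> cdf \<nu> x > cdf \<nu> r" by (auto simp: eventually_at_top_linorder)
  define R where "R = max 1 (max (r - b) (b' - r))"
  have R: "R > 0" "r - R \<le> b" "r + R \<ge> b'" by (auto simp: R_def)
  define A where "A = {r-R<..r}"
  define B where "B = {r<..r+R}"
  have mA: "measure \<nu> A > 0" using cdf_diff_eq[of "r-R" r] b[OF R(2)] R by (simp add: A_def)
  have mB: "measure \<nu> B > 0" using cdf_diff_eq[of r "r+R"] b'[OF R(3)] R by (simp add: B_def)
  define T where "T = pi / (2*R)"
  have "T > 0" using R by (simp add: T_def)
  moreover have "cmod (char \<nu> u) < 1" if u: "u \<noteq> 0" "\<bar>u\<bar> \<le> T" for u
  proof (rule ccontr)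
    assume "\<not> cmod (char \<nu> u) < 1"
    hence n1: "cmod (char \<nu> u) = 1" using cmod_char_le_1[of u] by simp
    define p where "p = char \<nu> u"
    define f where "f x = 1 - Re (cnj p * iexp (u * x))" for x
    have intc: "integrable \<nu> (\<lambda>x. iexp (u * x))"
      by (rule integrable_const_bound[of _ 1]) (auto simp del: of_real_mult)
    have intr: "integrable \<nu> (\<lambda>x. Re (cnj p * iexp (u * x)))"
      by (intro integrable_Re integrable_mult_right intc)
    have fle: "Re (cnj p * iexp (u * x)) \<le> 1" for x
    proof -
      have "Re (cnj p * iexp (u * x)) \<le> cmod (cnj p * iexp (u * x))" by (rule complex_Re_le_cmod)
      also have "\<dots> = 1" using n1 by (simp add: p_def norm_mult del: of_real_mult)
      finally show ?thesis .
    qed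
    have "integral\<^sup>L \<nu> f = 1 - Re (cnj p * p)"
    proof -
      have "integral\<^sup>L \<nu> f = 1 - integral\<^sup>L \<nu> (\<lambda>x. Re (cnj p * iexp (u * x)))"
        unfolding f_def using intr by (subst Bochner_Integration.integral_diff) (auto simp: prob_space[unfolded space_eq_univ])
      also have "integral\<^sup>L \<nu> (\<lambda>x. Re (cnj p * iexp (u * x))) = Re (cnj p * p)"
        using integral_Re[OF integrable_mult_right[OF intc, of "cnj p"]]
        by (simp only: integral_mult_right_zero p_def char_def)
      finally show ?thesis .
    qed
    also have "\<dots> = 1 - (cmod p)^2" using cmod_power2[of p] by (simp add: power2_eq_square)
    also have "\<dots> = 0" using n1 by (simp add: p_def)
    finally have "integral\<^sup>L \<nu> f = 0" .
    moreover have "integrable \<nu> f" unfolding f_def using intr by auto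
    ultimately have "AE x in \<nu>. f x = 0"
      using integral_nonneg_eq_0_iff_AE[of \<nu> f] fle by (auto simp: f_def)
    hence AEP: "AE x in \<nu>. cnj p * iexp (u * x) = 1"
    proof (rule AE_mp, intro AE_I2 impI)
      fix x assume "f x = 0"
      hence re: "Re (cnj p * iexp (u * x)) = 1" by (simp add: f_def)
      have "cmod (cnj p * iexp (u * x)) = 1" using n1 by (simp add: p_def norm_mult del: of_real_mult)
      hence "(Re (cnj p * iexp (u * x)))^2 + (Im (cnj p * iexp (u * x)))^2 = 1"
        by (simp add: cmod_def)
      hence "Im (cnj p * iexp (u * x)) = 0" using re by simp
      thus "cnj p * iexp (u * x) = 1" using re by (simp add: complex_eq_iff)
    qed
    obtain x1 where x1: "x1 \<in> A" "cnj p * iexp (u * x1) = 1"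
      using AE_pos_ex[OF AEP _ mA] by (auto simp: A_def)
    obtain x2 where x2: "x2 \<in> B" "cnj p * iexp (u * x2) = 1"
      using AE_pos_ex[OF AEP _ mB] by (auto simp: B_def)
    have "cnj p \<noteq> 0" using n1 by (auto simp: p_def)
    hence eq: "iexp (u * x1) = iexp (u * x2)" using x1 x2 by (metis mult_cancel_left)
    have "iexp (u * (x2 - x1)) = iexp (u * x2) / iexp (u * x1)"
      by (simp add: right_diff_distrib exp_diff[symmetric] algebra_simps)
    also have "\<dots> = 1" using eq by simp
    finally have "cos (u * (x2 - x1)) = 1"
      using Re_exp[of "\<i> * complex_of_real (u * (x2 - x1))"] by simp
    then obtain n :: int where n: "u * (x2 - x1) = real_of_int n * 2 * pi"
      using cos_one_2pi_int by blast
    have d: "0 < x2 - x1" "x2 - x1 < 2 * R" using x1(1) x2(1) by (auto simp: A_def B_def)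
    have "\<bar>u * (x2 - x1)\<bar> < pi"
    proof -
      have "\<bar>u * (x2 - x1)\<bar> = \<bar>u\<bar> * (x2 - x1)" using d by (simp add: abs_mult)
      also have "\<dots> < T * (2 * R)"
        using d u(2) u(1) by (intro mult_le_less_imp_less) auto
      also have "\<dots> = pi" using R by (simp add: T_def)
      finally show ?thesis .
    qed
    moreover have "u * (x2 - x1) \<noteq> 0" using u(1) d by simp
    ultimately show False
    proof (cases "n = 0")
      case True then show False using n \<open>u * (x2 - x1) \<noteq> 0\<close> by simp
    next
      case False
      hence "\<bar>real_of_int n\<bar> \<ge> 1" by linarith
      hence "\<bar>real_of_int n\<bar> * (2 * pi) \<ge> 1 * (2*pi)" by (intro mult_right_mono) auto
      hence "\<bar>u * (x2 - x1)\<bar> \<ge> 2 * pi" unfolding n by (simp add: abs_mult)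
      then show False using \<open>\<bar>u * (x2 - x1)\<bar> < pi\<close> pi_gt_zero by linarith
    qed
  qed
  ultimately show ?thesis by blast
qed


lemma fejer_pt:
  fixes T h y :: real and N :: nat
  assumes "N \<ge> 1" "T > 0" "h = T / N" "\<bar>y\<bar> \<le> 1 / T"
  shows "(N * cos 1)^2 \<le> (\<Sum>k<N. cos (real k * h * y))^2"
proof -
  have c: "cos 1 \<le> cos (real k * h * y)" if "k < N" for k
  proof -
    have "\<bar>real k * h * y\<bar> = real k * h * \<bar>y\<bar>" using assms by (simp add: abs_mult)
    also have "\<dots> \<le> real k * h * (1 / T)" using assms by (intro mult_left_mono) auto
    also have "\<dots> = real k / N" using assms by simp
    also have "\<dots> \<le> 1" using that by simp
    finally have le1: "\<bar>real k * h * y\<bar> \<le> 1" .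
    have "cos 1 \<le> cos \<bar>real k * h * y\<bar>"
      using le1 pi_gt3 by (intro cos_monotone_0_pi_le) auto
    thus ?thesis by simp
  qed
  have "N * cos 1 = (\<Sum>k<N. cos 1)" by simp
  also have "\<dots> \<le> (\<Sum>k<N. cos (real k * h * y))" using c by (intro sum_mono) auto
  finally have le: "N * cos 1 \<le> (\<Sum>k<N. cos (real k * h * y))" .
  have "0 \<le> N * cos 1" using pi_gt3 by (intro mult_nonneg_nonneg cos_ge_zero) auto
  thus ?thesis using le by (intro power_mono) auto
qed

lemma sq_expand:
  fixes a :: "nat \<Rightarrow> real"
  shows "(\<Sum>k<N. cos (a k))^2 + (\<Sum>k<N. sin (a k))^2 = (\<Sum>k<N. \<Sum>l<N. cos (a k - a l))"
  by (simp add: power2_eq_square sum_product sum.distrib[symmetric] cos_diff)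

lemma char_bound:
  fixes W :: "nat \<Rightarrow> 'a \<Rightarrow> real"
  assumes P: "prob_space M" and ind: "prob_space.indep_vars M (\<lambda>_. borel) W J"
    and fin: "finite J" and law: "\<And>j. j \<in> J \<Longrightarrow> distr M borel (W j) = \<nu>"
  shows "integral\<^sup>L M (\<lambda>\<omega>. cos (u * ((\<Sum>j\<in>J. W j \<omega>) - c))) \<le> cmod (char \<nu> u) ^ card J"
proof -
  interpret prob_space M by fact
  have rv[measurable]: "W j \<in> borel_measurable M" if "j \<in> J" for j
    using ind that by (auto simp: indep_vars_def)
  define S where "S \<omega> = (\<Sum>j\<in>J. W j \<omega>)" for \<omega>
  have Sm[measurable]: "S \<in> borel_measurable M" unfolding S_def by measurable
  have int1: "integrable M (\<lambda>\<omega>. iexp (u * S \<omega>))"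
    by (rule integrable_const_bound[of _ 1]) (auto simp del: of_real_mult)
  have int2: "integrable M (\<lambda>\<omega>. iexp (-(u * c)) * iexp (u * S \<omega>))"
    by (intro integrable_mult_right int1)
  have eq: "cos (u * (S \<omega> - c)) = Re (iexp (-(u * c)) * iexp (u * S \<omega>))" for \<omega>
  proof -
    have "iexp (-(u * c)) * iexp (u * S \<omega>) = iexp (u * (S \<omega> - c))"
      by (simp add: exp_add[symmetric] algebra_simps)
    thus ?thesis by (simp add: Re_exp)
  qed
  have "integral\<^sup>L M (\<lambda>\<omega>. cos (u * (S \<omega> - c))) = Re (iexp (-(u * c)) * integral\<^sup>L M (\<lambda>\<omega>. iexp (u * S \<omega>)))"
    unfolding eq using integral_Re[OF int2] by (simp only: integral_mult_right_zero)
  also have "\<dots> \<le> cmod (iexp (-(u * c)) * integral\<^sup>L M (\<lambda>\<omega>. iexp (u * S \<omega>)))"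
    by (rule complex_Re_le_cmod)
  also have "\<dots> = cmod (integral\<^sup>L M (\<lambda>\<omega>. iexp (u * S \<omega>)))"
    by (simp add: norm_mult del: of_real_mult)
  also have "integral\<^sup>L M (\<lambda>\<omega>. iexp (u * S \<omega>)) = char (distr M borel S) u"
    by (simp add: char_def integral_distr)
  also have "\<dots> = (\<Prod>j\<in>J. char (distr M borel (W j)) u)"
    unfolding S_def by (rule char_distr_sum[OF ind])
  also have "\<dots> = (\<Prod>j\<in>J. char \<nu> u)" using law by simp
  finally show ?thesis by (simp add: S_def norm_power)
qed


lemma anti_conc:
  fixes W :: "nat \<Rightarrow> 'a \<Rightarrow> real"
  assumes P: "prob_space M" and ind: "prob_space.indep_vars M (\<lambda>_. borel) W UNIV"
    and law: "\<And>j. distr M borel (W j) = \<nu>" and nd: "\<And>a. \<nu> \<noteq> return borel a"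
  shows "\<exists>\<delta>>0. \<forall>\<eta>>0. \<exists>m0. \<forall>J c. finite J \<longrightarrow> card J \<ge> m0 \<longrightarrow>
           measure M {\<omega>\<in>space M. \<bar>(\<Sum>j\<in>J. W j \<omega>) - c\<bar> \<le> \<delta>} \<le> \<eta>"
proof -
  interpret prob_space M by fact
  have rv[measurable]: "W j \<in> borel_measurable M" for j
    using ind by (auto simp: indep_vars_def)
  have rd: "real_distribution \<nu>" using real_distribution_distr[OF rv[of 0]] law[of 0] by simp
  obtain r where "0 < cdf \<nu> r" "cdf \<nu> r < 1" using nondirac_cdf[OF rd nd] by blast
  then obtain T where T: "T > 0" and Tch: "\<And>u. u \<noteq> 0 \<Longrightarrow> \<bar>u\<bar> \<le> T \<Longrightarrow> cmod (char \<nu> u) < 1"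
    using char_lt1[OF rd] by blast
  define \<kappa> :: real where "\<kappa> = cos 1"
  have \<kappa>: "\<kappa> > 0" unfolding \<kappa>_def using pi_gt3 by (intro cos_gt_zero) auto
  have "\<forall>\<eta>>0. \<exists>m0. \<forall>J c. finite J \<longrightarrow> card J \<ge> m0 \<longrightarrow>
           measure M {\<omega>\<in>space M. \<bar>(\<Sum>j\<in>J. W j \<omega>) - c\<bar> \<le> 1/T} \<le> \<eta>"
  proof (intro allI impI)
    fix \<eta> :: real assume \<eta>: "\<eta> > 0"
    obtain n :: nat where n: "2 / (\<eta> * \<kappa>^2) \<le> n" using real_arch_simple by blast
    define N where "N = Suc n"
    have N: "N \<ge> 1" "2 / (\<eta> * \<kappa>^2) \<le> N" using n by (auto simp: N_def)
    define h where "h = T / N"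
    define PR where "PR = {(k,l). k < N \<and> l < N \<and> k \<noteq> l}"
    have finPR: "finite PR" unfolding PR_def by (rule finite_subset[of _ "{..<N} \<times> {..<N}"]) auto
    have "\<forall>p\<in>PR. \<forall>\<^sub>F m in sequentially. cmod (char \<nu> ((real (fst p) - real (snd p)) * h)) ^ m \<le> \<eta> * \<kappa>^2 / 2"
    proof
      fix p assume "p \<in> PR"
      then obtain k l where p: "p = (k,l)" "k < N" "l < N" "k \<noteq> l" by (auto simp: PR_def)
      have "\<bar>real k - real l\<bar> \<le> N" using p by linarith
      moreover have "h \<ge> 0" using T by (simp add: h_def)
      ultimately have "\<bar>(real k - real l) * h\<bar> \<le> N * h" by (simp add: abs_mult mult_right_mono)
      also have "N * h = T" using N by (simp add: h_def)
      finally have "cmod (char \<nu> ((real k - real l) * h)) < 1"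
        using p T N by (intro Tch) (auto simp: h_def)
      hence "(\<lambda>m. cmod (char \<nu> ((real k - real l) * h)) ^ m) \<longlonglongrightarrow> 0"
        by (intro LIMSEQ_power_zero) auto
      hence "\<forall>\<^sub>F m in sequentially. cmod (char \<nu> ((real k - real l) * h)) ^ m < \<eta> * \<kappa>^2 / 2"
        using \<eta> \<kappa> by (intro order_tendstoD) auto
      thus "\<forall>\<^sub>F m in sequentially. cmod (char \<nu> ((real (fst p) - real (snd p)) * h)) ^ m \<le> \<eta> * \<kappa>^2 / 2"
        using p by (auto elim: eventually_mono)
    qed
    from eventually_ball_finite[OF finPR this]
    obtain m0 where m0: "\<And>m p. m \<ge> m0 \<Longrightarrow> p \<in> PR \<Longrightarrow> cmod (char \<nu> ((real (fst p) - real (snd p)) * h)) ^ m \<le> \<eta> * \<kappa>^2 / 2"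
      by (auto simp: eventually_sequentially)
    show "\<exists>m0. \<forall>J c. finite J \<longrightarrow> card J \<ge> m0 \<longrightarrow>
           measure M {\<omega>\<in>space M. \<bar>(\<Sum>j\<in>J. W j \<omega>) - c\<bar> \<le> 1/T} \<le> \<eta>"
    proof (intro exI[of _ m0] allI impI)
      fix J :: "nat set" and c :: real
      assume J: "finite J" "m0 \<le> card J"
      define S where "S \<omega> = (\<Sum>j\<in>J. W j \<omega>)" for \<omega>
      have Sm[measurable]: "S \<in> borel_measurable M" unfolding S_def by measurable
      define A where "A = {\<omega>\<in>space M. \<bar>S \<omega> - c\<bar> \<le> 1/T}"
      have Am: "A \<in> sets M" unfolding A_def by measurable
      define B where "B \<omega> = (\<Sum>k<N. \<Sum>l<N. cos ((real k - real l) * h * (S \<omega> - c))) / (N * \<kappa>)^2" for \<omega>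
      have Nk: "(N * \<kappa>)^2 > 0" using N \<kappa> by simp
      have ptw: "indicator A \<omega> \<le> B \<omega>" if "\<omega> \<in> space M" for \<omega>
      proof (cases "\<omega> \<in> A")
        case True
        hence "(N * \<kappa>)^2 \<le> (\<Sum>k<N. cos (real k * h * (S \<omega> - c)))^2"
          unfolding \<kappa>_def using N T by (intro fejer_pt) (auto simp: A_def h_def)
        also have "\<dots> \<le> (\<Sum>k<N. cos (real k * h * (S \<omega> - c)))^2 + (\<Sum>k<N. sin (real k * h * (S \<omega> - c)))^2"
          by simp
        also have "\<dots> = (\<Sum>k<N. \<Sum>l<N. cos ((real k - real l) * h * (S \<omega> - c)))"
          by (subst sq_expand) (simp add: algebra_simps)
        finally show ?thesis using True Nk by (simp add: B_def)
      next
        case False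
        have "0 \<le> (\<Sum>k<N. cos (real k * h * (S \<omega> - c)))^2 + (\<Sum>k<N. sin (real k * h * (S \<omega> - c)))^2"
          by simp
        also have "\<dots> = (\<Sum>k<N. \<Sum>l<N. cos ((real k - real l) * h * (S \<omega> - c)))"
          by (subst sq_expand) (simp add: algebra_simps)
        finally show ?thesis using False Nk by (simp add: B_def)
      qed
      have intc: "integrable M (\<lambda>\<omega>. cos ((real k - real l) * h * (S \<omega> - c)))" for k l
        by (rule integrable_const_bound[of _ 1]) auto
      have intB: "integrable M B" unfolding B_def using intc by auto
      have "measure M A = integral\<^sup>L M (indicator A)"
        using Am by (simp add: Int_absorb2 sets.sets_into_space)
      also have "\<dots> \<le> integral\<^sup>L M B"
        using ptw intB Am by (intro integral_mono) (auto simp: integrable_indicator_iff Int_absorb2 sets.sets_into_space emeasure_finite less_top[symmetric])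
      also have "integral\<^sup>L M B = (\<Sum>k<N. \<Sum>l<N. integral\<^sup>L M (\<lambda>\<omega>. cos ((real k - real l) * h * (S \<omega> - c)))) / (N * \<kappa>)^2"
        unfolding B_def using intc by (simp add: Bochner_Integration.integral_sum)
      also have "\<dots> \<le> (\<Sum>k<N. \<Sum>l<N. (if k = l then 1 else \<eta> * \<kappa>^2 / 2)) / (N * \<kappa>)^2"
      proof (intro divide_right_mono sum_mono)
        fix k l assume kl: "k \<in> {..<N}" "l \<in> {..<N}"
        have "integral\<^sup>L M (\<lambda>\<omega>. cos ((real k - real l) * h * (S \<omega> - c))) \<le> cmod (char \<nu> ((real k - real l) * h)) ^ card J"
          unfolding S_def using char_bound[OF P indep_vars_subset[OF ind] J(1), of \<nu> "(real k - real l) * h" c] law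
          by (simp add: mult.assoc)
        also have "\<dots> \<le> (if k = l then 1 else \<eta> * \<kappa>^2 / 2)"
        proof (cases "k = l")
          case True then show ?thesis using real_distribution.char_zero[OF rd] by simp
        next
          case False
          then show ?thesis using m0[OF J(2), of "(k,l)"] kl by (simp add: PR_def)
        qed
        finally show "integral\<^sup>L M (\<lambda>\<omega>. cos ((real k - real l) * h * (S \<omega> - c))) \<le> (if k = l then 1 else \<eta> * \<kappa>^2 / 2)" .
      qed simp
      also have "\<dots> \<le> (\<Sum>k<N. \<Sum>l<N. ((if k = l then 1 else 0) + \<eta> * \<kappa>^2 / 2)) / (N * \<kappa>)^2"
        using \<eta> \<kappa> by (intro divide_right_mono sum_mono) auto
      also have "\<dots> = (N + N * N * (\<eta> * \<kappa>^2 / 2)) / (N * \<kappa>)^2"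
        by (simp add: sum.distrib algebra_simps)
      also have "\<dots> = 1 / (N * \<kappa>^2) + \<eta> / 2"
        using N \<kappa> by (simp add: field_simps power2_eq_square)
      also have "1 / (N * \<kappa>^2) \<le> \<eta> / 2"
      proof -
        have "2 \<le> N * (\<eta> * \<kappa>^2)" using N(2) \<eta> \<kappa> by (simp add: field_simps)
        thus ?thesis using N \<eta> \<kappa> by (simp add: field_simps)
      qed
      finally show "measure M {\<omega>\<in>space M. \<bar>(\<Sum>j\<in>J. W j \<omega>) - c\<bar> \<le> 1/T} \<le> \<eta>"
        by (simp add: A_def S_def)
    qed
  qed
  thus ?thesis using T by (intro exI[of _ "1/T"]) auto
qed


lemma lborel_ball_le:
  fixes x :: complex assumes "\<rho> \<ge> 0"
  shows "emeasure lborel (ball x \<rho>) \<le> ennreal (4 * \<rho>^2)"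
proof -
  define a where "a = x - Complex \<rho> \<rho>"
  define b where "b = x + Complex \<rho> \<rho>"
  have sub: "ball x \<rho> \<subseteq> cbox a b"
  proof
    fix z assume "z \<in> ball x \<rho>"
    hence d: "cmod (x - z) < \<rho>" by (simp add: dist_norm)
    have "\<bar>Re (x - z)\<bar> \<le> cmod (x - z)" "\<bar>Im (x - z)\<bar> \<le> cmod (x - z)"
      by (rule abs_Re_le_cmod, rule abs_Im_le_cmod)
    thus "z \<in> cbox a b" using d
      by (auto simp: mem_box Basis_complex_def a_def b_def)
  qed
  have "emeasure lborel (ball x \<rho>) \<le> emeasure lborel (cbox a b)"
    using sub by (intro emeasure_mono) auto
  also have "\<dots> = ennreal (4 * \<rho>^2)"
    using assms by (simp add: emeasure_lborel_cbox_eq Basis_complex_def a_def b_def power2_eq_square)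
  finally show ?thesis .
qed

lemma ae_small_balls:
  fixes \<mu> :: "complex measure"
  assumes Pm: "prob_space \<mu>" and sm[measurable_cong]: "sets \<mu> = sets borel"
  shows "AE z in lborel. (\<lambda>n. real (Suc n) * measure \<mu> (ball z (1 / real (Suc n)^2))) \<longlonglongrightarrow> 0"
proof -
  interpret prob_space \<mu> by fact
  interpret pair_sigma_finite lborel \<mu> ..
  define r where "r n = 1 / real (Suc n)^2" for n
  have meas_pair: "(\<lambda>(z, x). indicator (ball z \<rho>) x :: ennreal) \<in> borel_measurable (lborel \<Otimes>\<^sub>M \<mu>)" for \<rho>
  proof -
    have "(\<lambda>(z, x). indicator (ball z \<rho>) x :: ennreal) = (\<lambda>p. if dist (fst p) (snd p) < \<rho> then 1 else 0)"
      by (auto simp: fun_eq_iff indicator_def)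
    also have "\<dots> \<in> borel_measurable (lborel \<Otimes>\<^sub>M \<mu>)" by measurable
    finally show ?thesis .
  qed
  have em: "emeasure \<mu> (ball z \<rho>) = (\<integral>\<^sup>+ x. indicator (ball z \<rho>) x \<partial>\<mu>)" for z \<rho>
    by (simp add: sm)
  have meas1: "(\<lambda>z. emeasure \<mu> (ball z \<rho>)) \<in> borel_measurable lborel" for \<rho>
    unfolding em using sigma_finite_measure.borel_measurable_nn_integral[OF prob_space_imp_sigma_finite[OF Pm] meas_pair] by simp
  have int1: "(\<integral>\<^sup>+ z. emeasure \<mu> (ball z \<rho>) \<partial>lborel) \<le> ennreal (4 * \<rho>^2)" if "\<rho> \<ge> 0" for \<rho>
  proof -
    have "(\<integral>\<^sup>+ z. emeasure \<mu> (ball z \<rho>) \<partial>lborel) = (\<integral>\<^sup>+ z. \<integral>\<^sup>+ x. indicator (ball z \<rho>) x \<partial>\<mu> \<partial>lborel)"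
      unfolding em ..
    also have "\<dots> = (\<integral>\<^sup>+ x. \<integral>\<^sup>+ z. indicator (ball z \<rho>) x \<partial>lborel \<partial>\<mu>)"
      using Fubini'[OF meas_pair] by simp
    also have "\<dots> = (\<integral>\<^sup>+ x. emeasure lborel (ball x \<rho>) \<partial>\<mu>)"
    proof (intro nn_integral_cong)
      fix x :: complex
      have "(\<lambda>z. indicator (ball z \<rho>) x :: ennreal) = indicator (ball x \<rho>)"
        by (auto simp: fun_eq_iff indicator_def dist_commute)
      thus "(\<integral>\<^sup>+ z. indicator (ball z \<rho>) x \<partial>lborel) = emeasure lborel (ball x \<rho>)" by simp
    qed
    also have "\<dots> \<le> (\<integral>\<^sup>+ x. ennreal (4 * \<rho>^2) \<partial>\<mu>)"
      using lborel_ball_le[OF that] by (intro nn_integral_mono) auto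
    also have "\<dots> = ennreal (4 * \<rho>^2)" by (simp add: emeasure_space_1)
    finally show ?thesis .
  qed
  define g where "g z = (\<Sum>n. ennreal (real (Suc n)) * emeasure \<mu> (ball z (r n)))" for z
  have meas2: "(\<lambda>z. ennreal (real (Suc n)) * emeasure \<mu> (ball z (r n))) \<in> borel_measurable lborel" for n
    by (rule borel_measurable_times_ennreal[OF borel_measurable_const meas1])
  have gm: "g \<in> borel_measurable lborel" unfolding g_def using meas2 by (rule borel_measurable_suminf_order)
  have "(\<integral>\<^sup>+ z. g z \<partial>lborel) = (\<Sum>n. \<integral>\<^sup>+ z. ennreal (real (Suc n)) * emeasure \<mu> (ball z (r n)) \<partial>lborel)"
    unfolding g_def using meas2 by (intro nn_integral_suminf)
  also have "\<dots> = (\<Sum>n. ennreal (real (Suc n)) * \<integral>\<^sup>+ z. emeasure \<mu> (ball z (r n)) \<partial>lborel)"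
    using meas1 by (simp add: nn_integral_cmult)
  also have "\<dots> \<le> (\<Sum>n. ennreal (4 * inverse (real (Suc n) ^ 3)))"
  proof (intro suminf_le)
    fix n
    have "ennreal (real (Suc n)) * (\<integral>\<^sup>+ z. emeasure \<mu> (ball z (r n)) \<partial>lborel)
          \<le> ennreal (real (Suc n)) * ennreal (4 * (r n)^2)"
      using int1[of "r n"] by (intro mult_left_mono) (auto simp: r_def)
    also have "\<dots> = ennreal (4 * inverse (real (Suc n) ^ 3))"
      by (simp add: ennreal_mult[symmetric] r_def power2_eq_square power3_eq_cube field_simps del: of_nat_Suc)
    finally show "ennreal (real (Suc n)) * (\<integral>\<^sup>+ z. emeasure \<mu> (ball z (r n)) \<partial>lborel) \<le> ennreal (4 * inverse (real (Suc n) ^ 3))" .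
  qed auto
  also have "\<dots> < \<infinity>"
  proof -
    have "summable (\<lambda>n. inverse (real n ^ 3))" by (rule inverse_power_summable) auto
    hence "summable (\<lambda>n. inverse (real (Suc n) ^ 3))"
      by (rule iffD2[OF summable_Suc_iff[of "\<lambda>n. inverse (real n ^ 3)"]])
    hence "summable (\<lambda>n. 4 * inverse (real (Suc n) ^ 3))"
      by (rule summable_mult)
    thus ?thesis by (subst suminf_ennreal2) auto
  qed
  finally have "AE z in lborel. g z \<noteq> \<infinity>" using gm by (intro nn_integral_PInf_AE) auto
  thus ?thesis
  proof (rule AE_mp, intro AE_I2 impI)
    fix z assume gz: "g z \<noteq> \<infinity>"
    have "g z = (\<Sum>n. ennreal (real (Suc n) * measure \<mu> (ball z (r n))))"
      unfolding g_def by (simp add: emeasure_eq_measure ennreal_mult del: of_nat_Suc)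
    hence "summable (\<lambda>n. real (Suc n) * measure \<mu> (ball z (r n)))"
      using gz by (intro summable_suminf_not_top) auto
    thus "(\<lambda>n. real (Suc n) * measure \<mu> (ball z (1 / real (Suc n)^2))) \<longlonglongrightarrow> 0"
      using summable_LIMSEQ_zero unfolding r_def by blast
  qed
qed


lemma ereal_member_le_sum:
  fixes f :: "'b \<Rightarrow> ereal"
  assumes "finite A" "\<And>x. x \<in> A \<Longrightarrow> f x \<ge> 0" "a \<in> A"
  shows "f a \<le> sum f A"
proof -
  have "sum f A = f a + sum f (A - {a})" using assms by (simp add: sum.remove)
  moreover have "sum f (A - {a}) \<ge> 0" using assms by (intro sum_nonneg) auto
  ultimately show ?thesis by (simp add: add_increasing2)
qed

lemma log_minus_nonneg: "log_minus d \<ge> 0"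
  by (simp add: log_minus_def)

lemma log_minus_bound:
  assumes "log_minus d < ereal t" "d \<ge> 0"
  shows "d > 0 \<and> 1 / d \<le> exp t"
proof -
  have "d \<noteq> 0" using assms by (auto simp: log_minus_def)
  hence d: "d > 0" using assms by simp
  show ?thesis
  proof (cases "d \<le> 1")
    case True
    hence "\<bar>ln d\<bar> < t" using assms d by (simp add: log_minus_def)
    hence "ln (1 / d) \<le> t" using d by (simp add: ln_div)
    hence "exp (ln (1 / d)) \<le> exp t" by simp
    hence "1 / d \<le> exp t" using d by simp
    thus ?thesis using d by simp
  next
    case False
    have "t \<ge> 0" using assms False by (auto simp: log_minus_def)
    hence "1 \<le> exp t" by simp
    moreover have "1 / d \<le> 1" using False by simp
    ultimately show ?thesis using d by linarith
  qed
qed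

lemma key_det:
  fixes x \<xi>' :: "nat \<Rightarrow> complex" and z L :: complex
  assumes n: "n \<ge> 1" and m: "m \<le> n" and kk: "kk \<le> n" and \<epsilon>: "\<epsilon> > 0"
    and L: "L = (\<Sum>j\<in>{1..m}. 1 / (z - x j)) + (\<Sum>l\<in>{1..kk}. 1 / (z - \<xi>' l))"
    and xb: "\<And>j. j \<in> {1..m} \<Longrightarrow> dist z (x j) \<ge> 1 / real (Suc n)^2"
    and \<xi>b: "\<And>l. l \<in> {1..kk} \<Longrightarrow> 1 / cmod (z - \<xi>' l) \<le> exp (\<epsilon> * real n / 4)"
    and big: "real n * (real (Suc n))^2 + real n * exp (\<epsilon> * real n / 4) < exp (\<epsilon> * real n)"
    and small: "exp (- (\<epsilon> * real n)) < \<delta>"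
    and Lb: "cmod L > \<delta>"
  shows "\<bar>ln (cmod L) / real n\<bar> \<le> \<epsilon>"
proof -
  have "cmod L \<le> (\<Sum>j\<in>{1..m}. cmod (1 / (z - x j))) + (\<Sum>l\<in>{1..kk}. cmod (1 / (z - \<xi>' l)))"
    unfolding L by (intro order.trans[OF norm_triangle_ineq] add_mono norm_sum)
  also have "\<dots> \<le> (\<Sum>j\<in>{1..m}. real (Suc n)^2) + (\<Sum>l\<in>{1..kk}. exp (\<epsilon> * real n / 4))"
  proof (intro add_mono sum_mono)
    fix j assume j: "j \<in> {1..m}"
    have pos: "0 < 1 / real (Suc n)^2" by simp
    have c: "cmod (z - x j) \<ge> 1 / real (Suc n)^2" using xb[OF j] by (simp add: dist_norm)
    hence cp: "cmod (z - x j) > 0" using pos by linarith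
    have "1 / cmod (z - x j) \<le> 1 / (1 / real (Suc n)^2)"
      by (rule divide_left_mono[OF c]) (use cp in \<open>simp_all del: of_nat_Suc\<close>)
    thus "cmod (1 / (z - x j)) \<le> real (Suc n)^2" by (simp add: norm_divide)
  next
    fix l assume "l \<in> {1..kk}"
    thus "cmod (1 / (z - \<xi>' l)) \<le> exp (\<epsilon> * real n / 4)" using \<xi>b by (simp add: norm_divide)
  qed
  also have "\<dots> = real m * real (Suc n)^2 + real kk * exp (\<epsilon> * real n / 4)" by simp
  also have "\<dots> \<le> real n * real (Suc n)^2 + real n * exp (\<epsilon> * real n / 4)"
    using m kk by (intro add_mono mult_right_mono) auto
  also have "\<dots> < exp (\<epsilon> * real n)" by (rule big)
  finally have up: "cmod L < exp (\<epsilon> * real n)" .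
  have Lpos: "cmod L > 0" using Lb small by (smt (verit) exp_gt_zero)
  have "ln (cmod L) < ln (exp (\<epsilon> * real n))" using up Lpos by (subst ln_less_cancel_iff) auto
  hence u: "ln (cmod L) < \<epsilon> * real n" by simp
  have "ln (exp (- (\<epsilon> * real n))) < ln (cmod L)" using Lb small Lpos by (subst ln_less_cancel_iff) auto
  hence l: "- (\<epsilon> * real n) < ln (cmod L)" by simp
  have "\<bar>ln (cmod L)\<bar> < \<epsilon> * real n" using u l by linarith
  hence "\<bar>ln (cmod L)\<bar> / real n < \<epsilon>" using n by (simp add: divide_less_eq)
  thus ?thesis by simp
qed


lemma ae_const_return:
  fixes \<mu> :: "'b::topological_space measure"
  assumes "prob_space \<mu>" "sets \<mu> = sets borel" "AE x in \<mu>. x = c"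
  shows "\<mu> = return borel c"
proof (rule measure_eqI)
  interpret prob_space \<mu> by fact
  show "sets \<mu> = sets (return borel c)" using assms(2) by simp
  fix A assume A: "A \<in> sets \<mu>"
  have "emeasure \<mu> A = (\<integral>\<^sup>+ x. indicator A x \<partial>\<mu>)" using A by simp
  also have "\<dots> = (\<integral>\<^sup>+ x. indicator A c \<partial>\<mu>)"
    using assms(3) by (intro nn_integral_cong_AE) (auto elim: AE_mp)
  also have "\<dots> = indicator A c" by (simp add: emeasure_space_1)
  also have "\<dots> = emeasure (return borel c) A" using A assms(2) by simp
  finally show "emeasure \<mu> A = emeasure (return borel c) A" .
qed

lemma nondeg_R:
  fixes \<mu> :: "complex measure" and z :: complex
  assumes P: "prob_space \<mu>" and sm: "sets \<mu> = sets borel" and nd: "\<And>c. \<mu> \<noteq> return borel c"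
  shows "\<exists>R. (R = Re \<or> R = Im) \<and> (\<forall>a. distr \<mu> borel (\<lambda>x. R (1 / (z - x))) \<noteq> return borel a)"
proof (rule ccontr)
  assume "\<not> ?thesis"
  then obtain a b where a: "distr \<mu> borel (\<lambda>x. Re (1 / (z - x))) = return borel a"
    and b: "distr \<mu> borel (\<lambda>x. Im (1 / (z - x))) = return borel b" by blast
  have mRe: "(\<lambda>x. Re (1 / (z - x))) \<in> borel_measurable \<mu>" using sm by (simp add: measurable_cong_sets[OF sm refl])
  have mIm: "(\<lambda>x. Im (1 / (z - x))) \<in> borel_measurable \<mu>" using sm by (simp add: measurable_cong_sets[OF sm refl])
  have "AE y in distr \<mu> borel (\<lambda>x. Re (1 / (z - x))). y = a" unfolding a by (simp add: AE_return)
  hence aa: "AE x in \<mu>. Re (1 / (z - x)) = a" using mRe by (subst (asm) AE_distr_iff) auto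
  have "AE y in distr \<mu> borel (\<lambda>x. Im (1 / (z - x))). y = b" unfolding b by (simp add: AE_return)
  hence bb: "AE x in \<mu>. Im (1 / (z - x)) = b" using mIm by (subst (asm) AE_distr_iff) auto
  have "AE x in \<mu>. x = z - 1 / Complex a b"
    using aa bb
  proof (eventually_elim)
    case (elim x)
    hence "1 / (z - x) = Complex a b" by (simp add: complex_eq_iff)
    hence "z - x = 1 / Complex a b" by (metis inverse_inverse_eq inverse_eq_divide)
    thus ?case by (simp add: algebra_simps)
  qed
  hence "\<mu> = return borel (z - 1 / Complex a b)" by (rule ae_const_return[OF P sm])
  with nd show False by blast
qed

theorem mainTheorem15:
  fixes M :: "'a measure" and \<mu> :: "complex measure"
    and X :: "nat \<Rightarrow> 'a \<Rightarrow> complex"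
    and k :: "nat \<Rightarrow> nat" and \<xi> :: "nat \<Rightarrow> nat \<Rightarrow> complex"
    and E :: "complex set"
  assumes "prob_space M"
    and "prob_space \<mu>"
    and nondeg: "\<And>c. \<mu> \<noteq> return borel c"
    and indep: "prob_space.indep_vars M (\<lambda>_. borel) X UNIV"
    and law: "\<And>j. distr M borel (X j) = \<mu>"
    and k_le: "\<And>n. k n \<le> n"
    and k_small: "(\<lambda>n. real (k n) / real n) \<longlonglongrightarrow> 0"
    and E_null: "E \<in> null_sets lborel"
    and xi_cond: "\<And>z. z \<notin> E \<Longrightarrow>
        limsup (\<lambda>n. ereal (1 / real n) * (\<Sum>l\<in>{1..k n}. log_minus (cmod (z - \<xi> n l)))) = 0"
  shows "\<exists>F \<in> null_sets lborel. \<forall>z. z \<notin> F \<longrightarrow> (\<forall>\<epsilon>>0.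
      (\<lambda>n. measure M {\<omega> \<in> space M.
          (\<exists>j\<in>{1..n - k n}. X j \<omega> = z) \<or> (\<exists>l\<in>{1..k n}. \<xi> n l = z) \<or>
          Ln_fun k \<xi> (\<lambda>j. X j \<omega>) n z = 0 \<or>
          \<bar>ln (cmod (Ln_fun k \<xi> (\<lambda>j. X j \<omega>) n z)) / real n\<bar> > \<epsilon>})
      \<longlonglongrightarrow> 0)"
proof -
  interpret P: prob_space M by fact
  have rvX[measurable]: "X j \<in> borel_measurable M" for j
    using indep by (auto simp: P.indep_vars_def)
  have sm: "sets \<mu> = sets borel" using law[of 0] by (metis sets_distr)
  from ae_small_balls[OF assms(2) sm]
  obtain N1 where N1: "N1 \<in> null_sets lborel"
    "{z \<in> space lborel. \<not> (\<lambda>n. real (Suc n) * measure \<mu> (ball z (1 / real (Suc n)^2))) \<longlonglongrightarrow> 0} \<subseteq> N1"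
    by (elim AE_E) (blast intro: null_setsI)
  show ?thesis
  proof (intro bexI[of _ "E \<union> N1"] allI impI)
    show "E \<union> N1 \<in> null_sets lborel" using E_null N1(1) by (rule null_sets.Un)
    fix z :: complex and \<epsilon> :: real
    assume z: "z \<notin> E \<union> N1" and \<epsilon>: "\<epsilon> > 0"
    have balls: "(\<lambda>n. real (Suc n) * measure \<mu> (ball z (1 / real (Suc n)^2))) \<longlonglongrightarrow> 0"
      using z N1(2) by auto
    obtain R where R: "R = Re \<or> R = Im" and Rnd: "\<And>a. distr \<mu> borel (\<lambda>x. R (1 / (z - x))) \<noteq> return borel a"
      using nondeg_R[OF assms(2) sm nondeg, of z] by blast
    have Rm: "(\<lambda>x. R (1 / (z - x))) \<in> borel_measurable borel" using R by (elim disjE) simp_all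
    have Rle: "\<bar>R w\<bar> \<le> cmod w" for w using R abs_Re_le_cmod abs_Im_le_cmod by (elim disjE) simp_all
    have Rsum: "R (\<Sum>j\<in>J. f j) = (\<Sum>j\<in>J. R (f j))" for J and f :: "nat \<Rightarrow> complex"
      using R by (elim disjE) (simp_all add: Re_sum Im_sum)
    have Radd: "R (a + b) = R a + R b" for a b using R by (elim disjE) simp_all
    define W where "W j \<omega> = R (1 / (z - X j \<omega>))" for j \<omega>
    have indW: "P.indep_vars (\<lambda>_. borel) W UNIV"
      unfolding W_def by (rule P.indep_vars_compose2[OF indep]) (use Rm in simp)
    have lawW: "distr M borel (W j) = distr \<mu> borel (\<lambda>x. R (1 / (z - x)))" for j
    proof -
      have "distr \<mu> borel (\<lambda>x. R (1 / (z - x))) = distr (distr M borel (X j)) borel (\<lambda>x. R (1 / (z - x)))"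
        by (simp add: law)
      also have "\<dots> = distr M borel ((\<lambda>x. R (1 / (z - x))) \<circ> X j)"
        using Rm by (intro distr_distr) auto
      finally show ?thesis by (simp add: W_def[abs_def] comp_def)
    qed
    obtain \<delta> where \<delta>: "\<delta> > 0" and AC: "\<And>\<eta>. \<eta> > 0 \<Longrightarrow> \<exists>m0. \<forall>J c. finite J \<longrightarrow> card J \<ge> m0 \<longrightarrow>
           measure M {\<omega>\<in>space M. \<bar>(\<Sum>j\<in>J. W j \<omega>) - c\<bar> \<le> \<delta>} \<le> \<eta>"
      using anti_conc[OF assms(1) indW lawW Rnd] by blast
    define r where "r n = 1 / real (Suc n)^2" for n
    define c where "c n = - R (\<Sum>l\<in>{1..k n}. 1 / (z - \<xi> n l))" for n
    define U where "U n = {\<omega>\<in>space M. \<exists>j\<in>{1..n - k n}. X j \<omega> \<in> ball z (r n)}" for n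
    define A where "A n = {\<omega>\<in>space M. \<bar>(\<Sum>j\<in>{1..n - k n}. W j \<omega>) - c n\<bar> \<le> \<delta>}" for n
    define Bad where "Bad n = {\<omega> \<in> space M.
          (\<exists>j\<in>{1..n - k n}. X j \<omega> = z) \<or> (\<exists>l\<in>{1..k n}. \<xi> n l = z) \<or>
          Ln_fun k \<xi> (\<lambda>j. X j \<omega>) n z = 0 \<or>
          \<bar>ln (cmod (Ln_fun k \<xi> (\<lambda>j. X j \<omega>) n z)) / real n\<bar> > \<epsilon>}" for n
    have Wm[measurable]: "W j \<in> borel_measurable M" for j
      unfolding W_def using Rm by (rule measurable_compose[OF rvX])
    have Um: "U n \<in> sets M" for n
    proof -
      have "U n = (\<Union>j\<in>{1..n - k n}. {\<omega>\<in>space M. X j \<omega> \<in> ball z (r n)})" by (auto simp: U_def)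
      also have "\<dots> \<in> sets M" by (intro sets.finite_UN) auto
      finally show ?thesis .
    qed
    have Am: "A n \<in> sets M" for n unfolding A_def by measurable
    have U0: "(\<lambda>n. measure M (U n)) \<longlonglongrightarrow> 0"
    proof (rule tendsto_sandwich[OF _ _ tendsto_const balls])
      show "\<forall>\<^sub>F n in sequentially. 0 \<le> measure M (U n)" by simp
      show "\<forall>\<^sub>F n in sequentially. measure M (U n) \<le> real (Suc n) * measure \<mu> (ball z (1 / real (Suc n)^2))"
      proof (intro always_eventually allI)
        fix n
        have "U n = (\<Union>j\<in>{1..n - k n}. {\<omega>\<in>space M. X j \<omega> \<in> ball z (r n)})" by (auto simp: U_def)
        hence "measure M (U n) \<le> (\<Sum>j\<in>{1..n - k n}. measure M {\<omega>\<in>space M. X j \<omega> \<in> ball z (r n)})"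
          by (simp only:, intro P.finite_measure_subadditive_finite) auto
        also have "\<dots> = (\<Sum>j\<in>{1..n - k n}. measure \<mu> (ball z (r n)))"
        proof (intro sum.cong refl)
          fix j
          have "measure M {\<omega>\<in>space M. X j \<omega> \<in> ball z (r n)} = measure (distr M borel (X j)) (ball z (r n))"
            by (subst measure_distr) (auto simp: vimage_def Int_def conj_commute)
          thus "measure M {\<omega>\<in>space M. X j \<omega> \<in> ball z (r n)} = measure \<mu> (ball z (r n))" by (simp add: law)
        qed
        also have "\<dots> = real (n - k n) * measure \<mu> (ball z (r n))" by simp
        also have "\<dots> \<le> real (Suc n) * measure \<mu> (ball z (r n))"
          by (intro mult_right_mono) auto
        finally show "measure M (U n) \<le> real (Suc n) * measure \<mu> (ball z (1 / real (Suc n)^2))"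
          by (simp add: r_def)
      qed
    qed
    have mk: "filterlim (\<lambda>n. n - k n) at_top sequentially"
    proof -
      have "\<forall>\<^sub>F n in sequentially. real (k n) / real n < 1/2"
        using k_small by (rule order_tendstoD) simp
      hence ev: "\<forall>\<^sub>F n in sequentially. n \<ge> 1 \<and> real (k n) / real n < 1/2"
        using eventually_ge_at_top[of 1] by eventually_elim auto
      show ?thesis unfolding filterlim_at_top
      proof (intro allI)
        fix Z :: nat
        have "\<forall>\<^sub>F n in sequentially. n \<ge> 2 * Z \<and> n \<ge> 1 \<and> real (k n) / real n < 1/2"
          using ev eventually_ge_at_top[of "2*Z"] by eventually_elim auto
        thus "\<forall>\<^sub>F n in sequentially. Z \<le> n - k n"
        proof eventually_elim
          case (elim n)
          hence "real (k n) < real n / 2" by (auto simp: divide_less_eq)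
          hence "real Z \<le> real n - real (k n)" using elim by linarith
          thus ?case using k_le[of n] by linarith
        qed
      qed
    qed
    have A0: "(\<lambda>n. measure M (A n)) \<longlonglongrightarrow> 0"
    proof (rule order_tendstoI)
      fix \<eta> :: real assume "\<eta> > 0"
      hence "\<eta>/2 > 0" by simp
      from AC[OF this] obtain m0 where m0: "\<And>J c. finite J \<Longrightarrow> card J \<ge> m0 \<Longrightarrow>
           measure M {\<omega>\<in>space M. \<bar>(\<Sum>j\<in>J. W j \<omega>) - c\<bar> \<le> \<delta>} \<le> \<eta>/2" by blast
      have "\<forall>\<^sub>F n in sequentially. n - k n \<ge> m0" using mk by (simp add: filterlim_at_top)
      thus "\<forall>\<^sub>F n in sequentially. measure M (A n) < \<eta>"
      proof eventually_elim
        case (elim n)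
        have "measure M (A n) \<le> \<eta>/2" unfolding A_def using elim by (intro m0) auto
        thus ?case using \<open>\<eta> > 0\<close> by simp
      qed
    next
      fix \<eta> :: real assume "\<eta> < 0"
      thus "\<forall>\<^sub>F n in sequentially. \<eta> < measure M (A n)" by (intro always_eventually) (auto intro: less_le_trans)
    qed
    have e2: "\<forall>\<^sub>F n in sequentially. \<forall>l\<in>{1..k n}. log_minus (cmod (z - \<xi> n l)) < ereal (\<epsilon> * real n / 4)"
    proof -
      have "limsup (\<lambda>n. ereal (1 / real n) * (\<Sum>l\<in>{1..k n}. log_minus (cmod (z - \<xi> n l)))) < ereal (\<epsilon>/4)"
        using xi_cond[of z] z \<epsilon> by simp
      hence "\<forall>\<^sub>F n in sequentially. ereal (1 / real n) * (\<Sum>l\<in>{1..k n}. log_minus (cmod (z - \<xi> n l))) < ereal (\<epsilon>/4)"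
        by (rule Limsup_lessD)
      thus ?thesis using eventually_ge_at_top[of 1]
      proof eventually_elim
        case (elim n)
        define S where "S = (\<Sum>l\<in>{1..k n}. log_minus (cmod (z - \<xi> n l)))"
        have S0: "S \<ge> 0" unfolding S_def by (intro sum_nonneg) (simp add: log_minus_nonneg)
        have np: "1 / real n > 0" using elim by simp
        have "S < ereal (\<epsilon> * real n / 4)"
        proof (cases S)
          case (real s)
          hence "1 / real n * s < \<epsilon> / 4" using elim S_def by simp
          hence "s < \<epsilon> * real n / 4" using elim by (simp add: field_simps)
          thus ?thesis using real by simp
        next
          case PInf
          hence "ereal (1 / real n) * S = \<infinity>" using np by simp
          thus ?thesis using elim S_def by simp
        next
          case MInf thus ?thesis using S0 by simp
        qed
        moreover have "log_minus (cmod (z - \<xi> n l)) \<le> S" if "l \<in> {1..k n}" for l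
          unfolding S_def using that by (intro ereal_member_le_sum) (auto simp: log_minus_nonneg)
        ultimately show ?case by (meson atLeastAtMost_iff le_less_trans)
      qed
    qed
    have e3: "\<forall>\<^sub>F n in sequentially. real n * (real (Suc n))^2 + real n * exp (\<epsilon> * real n / 4) < exp (\<epsilon> * real n)"
      using \<epsilon> by real_asymp
    have e4: "\<forall>\<^sub>F n in sequentially. exp (- (\<epsilon> * real n)) < \<delta>"
      using \<epsilon> \<delta> by real_asymp
    have sub: "\<forall>\<^sub>F n in sequentially. Bad n \<subseteq> U n \<union> A n"
      using eventually_ge_at_top[of 1] e2 e3 e4
    proof eventually_elim
      case (elim n)
      show ?case
      proof
        fix \<omega> assume \<omega>: "\<omega> \<in> Bad n"
        show "\<omega> \<in> U n \<union> A n"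
        proof (rule ccontr)
          assume "\<omega> \<notin> U n \<union> A n"
          hence nU: "\<And>j. j \<in> {1..n - k n} \<Longrightarrow> dist z (X j \<omega>) \<ge> r n"
            and nA: "\<bar>(\<Sum>j\<in>{1..n - k n}. W j \<omega>) - c n\<bar> > \<delta>"
            using \<omega> by (auto simp: U_def A_def Bad_def not_less)
          have rpos: "r n > 0" by (simp add: r_def)
          have xne: "X j \<omega> \<noteq> z" if "j \<in> {1..n - k n}" for j
            using nU[OF that] rpos by auto
          have \<xi>b: "cmod (z - \<xi> n l) > 0 \<and> 1 / cmod (z - \<xi> n l) \<le> exp (\<epsilon> * real n / 4)" if "l \<in> {1..k n}" for l
            using elim(2) that by (intro log_minus_bound) auto
          have \<xi>ne: "\<xi> n l \<noteq> z" if "l \<in> {1..k n}" for l using \<xi>b[OF that] by auto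
          define L where "L = Ln_fun k \<xi> (\<lambda>j. X j \<omega>) n z"
          have RL: "R L = (\<Sum>j\<in>{1..n - k n}. W j \<omega>) - c n"
            by (simp add: L_def Ln_fun_def Radd Rsum W_def c_def)
          have Lb: "cmod L > \<delta>" using nA Rle[of L] RL by linarith
          have "\<bar>ln (cmod L) / real n\<bar> \<le> \<epsilon>"
            by (rule key_det[where \<xi>'="\<xi> n" and x="\<lambda>j. X j \<omega>" and m="n - k n" and kk="k n"])
               (use elim k_le[of n] \<epsilon> Lb \<xi>b nU in \<open>auto simp: L_def Ln_fun_def r_def\<close>)
          moreover have "L \<noteq> 0" using Lb \<delta> by auto
          ultimately show False using \<omega> xne \<xi>ne by (auto simp: Bad_def L_def)
        qed
      qed
    qed
    show "(\<lambda>n. measure M {\<omega> \<in> space M.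
          (\<exists>j\<in>{1..n - k n}. X j \<omega> = z) \<or> (\<exists>l\<in>{1..k n}. \<xi> n l = z) \<or>
          Ln_fun k \<xi> (\<lambda>j. X j \<omega>) n z = 0 \<or>
          \<bar>ln (cmod (Ln_fun k \<xi> (\<lambda>j. X j \<omega>) n z)) / real n\<bar> > \<epsilon>}) \<longlonglongrightarrow> 0"
      unfolding Bad_def[symmetric]
    proof (rule tendsto_sandwich[OF _ _ tendsto_const tendsto_add_zero[OF U0 A0]])
      show "\<forall>\<^sub>F n in sequentially. 0 \<le> measure M (Bad n)" by simp
      show "\<forall>\<^sub>F n in sequentially. measure M (Bad n) \<le> measure M (U n) + measure M (A n)"
        using sub
      proof eventually_elim
        case (elim n)
        have "measure M (Bad n) \<le> measure M (U n \<union> A n)"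
          using elim Um Am by (intro P.finite_measure_mono) auto
        also have "\<dots> \<le> measure M (U n) + measure M (A n)" using Um Am by (rule measure_Un_le)
        finally show ?case .
      qed
    qed
  qed
qed

end
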